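(* Let $N\in\mathbb{N}$, $f_1,\ldots,f_N:[0,1]\to[0,\infty)$ measurable functions, and $\varepsilon>0$. Then there exist orientation preserving diffeomorphisms $\phi_1,\ldots,\phi_N$ of $[0,1]$ such that \[\int_0^1\max_i\big(f_i(\phi_i(\tilde t))\,\dot\phi_i(\tilde t)\big)\,d\tilde t\leq\max_i\int_0^1f_i(t)\,dt+\varepsilon.\] *)

theory Defs
  imports "HOL-Analysis.Analysis"
begin

definition smooth_on_open :: "real set \<Rightarrow> (real \<Rightarrow> real) \<Rightarrow> bool" where
  "smooth_on_open U g \<longleftrightarrow> open U \<and>
     (\<forall>k. \<forall>x\<in>U. ((deriv ^^ k) g) field_differentiable (at x))"

text \<open>Smooth on the closed interval [0,1] in the sense of manifolds with boundary:
  smooth on some open neighbourhood of [0,1] (values outside [0,1] are irrelevant,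
  so this is the same as admitting a smooth extension).\<close>
definition smooth_on_unit :: "(real \<Rightarrow> real) \<Rightarrow> bool" where
  "smooth_on_unit g \<longleftrightarrow> (\<exists>U. {0..1} \<subseteq> U \<and> smooth_on_open U g)"

definition op_diffeo_unit :: "(real \<Rightarrow> real) \<Rightarrow> bool" where
  "op_diffeo_unit \<phi> \<longleftrightarrow>
     bij_betw \<phi> {0..1} {0..1} \<and> smooth_on_unit \<phi> \<and>
     (\<exists>\<psi>. smooth_on_unit \<psi> \<and> (\<forall>x\<in>{0..1}. \<psi> (\<phi> x) = x)) \<and>
     strict_mono_on {0..1} \<phi>"

end

theory Submission
  imports Defs
begin


lemma deriv_poly_fun: "deriv (poly p) = poly (pderiv (p::real poly))"
  by (rule ext) (rule DERIV_imp_deriv, rule poly_DERIV)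

lemma deriv_poly_iter: "(deriv ^^ k) (poly p) = poly ((pderiv ^^ k) (p::real poly))"
  by (induction k) (auto simp: deriv_poly_fun)

lemma smooth_poly: "smooth_on_unit (poly (p::real poly))"
  unfolding smooth_on_unit_def smooth_on_open_def
  apply (rule exI[of _ UNIV])
  by (auto simp: deriv_poly_iter field_differentiable_def intro: poly_DERIV)

lemma rat_deriv:
  fixes P h :: "real poly"
  assumes "poly h x \<noteq> 0"
  shows "((\<lambda>x. poly P x / poly h x ^ Suc m) has_real_derivative
          poly (pderiv P * h - smult (of_nat (Suc m)) (P * pderiv h)) x / poly h x ^ Suc (Suc m)) (at x)"
proof -
  have d: "((\<lambda>x. poly P x / poly h x ^ Suc m) has_real_derivative
     (poly (pderiv P) x * poly h x ^ Suc m - poly P x * (of_nat (Suc m) * (poly (pderiv h) x * poly h x ^ (Suc m - Suc 0))))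
       / (poly h x ^ Suc m * poly h x ^ Suc m)) (at x)"
    by (rule DERIV_divide[OF poly_DERIV DERIV_power[OF poly_DERIV]]) (use assms in auto)
  define H where "H = poly h x"
  define t where "t = H ^ m"
  have H0: "H \<noteq> 0" "t \<noteq> 0" using assms by (auto simp: H_def t_def)
  have eq: "(poly (pderiv P) x * poly h x ^ Suc m - poly P x * (of_nat (Suc m) * (poly (pderiv h) x * poly h x ^ (Suc m - Suc 0))))
       / (poly h x ^ Suc m * poly h x ^ Suc m) = 
     poly (pderiv P * h - smult (of_nat (Suc m)) (P * pderiv h)) x / poly h x ^ Suc (Suc m)"
    unfolding H_def[symmetric] using H0
    by (simp add: t_def[symmetric] field_simps) (simp add: t_def H_def algebra_simps power2_eq_square)
  show ?thesis using d unfolding eq .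
qed

lemma diffeo_from_poly:
  fixes A :: "real poly"
  assumes pos: "\<And>x. x \<in> {0..1} \<Longrightarrow> poly (pderiv A) x > 0"
  shows "\<exists>\<phi> J. op_diffeo_unit \<phi> \<and> J > 0 \<and> \<phi> 0 = 0 \<and> \<phi> 1 = 1 \<and> \<phi> ` {0..1} \<subseteq> {0..1} \<and>
     continuous_on {0..1} \<phi> \<and> continuous_on {0..1} (deriv \<phi>) \<and>
     (\<forall>s\<in>{0..1}. (\<phi> has_real_derivative deriv \<phi> s) (at s) \<and> deriv \<phi> s \<ge> 0 \<and>
        poly (pderiv A) (\<phi> s) * deriv \<phi> s = J)"
proof -
  define h where "h = pderiv A"
  define S where "S = {x. 0 < poly h x}"
  have "open S" unfolding S_def by (rule open_Collect_less) (auto intro: continuous_intros)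
  have "0 \<in> S" "1 \<in> S" using pos by (auto simp: S_def h_def)
  obtain d0 where d0: "d0 > 0" "ball 0 d0 \<subseteq> S" using \<open>open S\<close> \<open>0 \<in> S\<close> open_contains_ball by blast
  obtain d1 where d1: "d1 > 0" "ball 1 d1 \<subseteq> S" using \<open>open S\<close> \<open>1 \<in> S\<close> open_contains_ball by blast
  define a where "a = min d0 d1 / 2"
  have a: "a > 0" using d0 d1 by (simp add: a_def)
  have hpos: "poly h x > 0" if "x \<in> {-a..1+a}" for x
  proof (cases "x < 0")
    case True
    then have "x \<in> ball 0 d0" using that d0 d1 by (auto simp: a_def dist_real_def)
    then show ?thesis using d0 by (auto simp: S_def)
  next
    case False
    show ?thesis
    proof (cases "x > 1")
      case True
      then have "x \<in> ball 1 d1" using that d0 d1 by (auto simp: a_def dist_real_def)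
      then show ?thesis using d1 by (auto simp: S_def)
    next
      case False
      then show ?thesis using \<open>\<not> x < 0\<close> pos by (auto simp: h_def)
    qed
  qed
  have Amono: "poly A x < poly A y" if "-a \<le> x" "x < y" "y \<le> 1+a" for x y
    by (rule DERIV_pos_imp_increasing[OF \<open>x < y\<close>]) (use that hpos in \<open>auto simp: h_def intro!: exI poly_DERIV\<close>)
  define J where "J = poly A 1 - poly A 0"
  have J: "J > 0" using Amono[of 0 1] a by (simp add: J_def)
  define KP where "KP = smult (1/J) (A - [:poly A 0:])"
  have Kx: "poly KP x = (poly A x - poly A 0) / J" for x by (simp add: KP_def)
  have dKP: "poly (pderiv KP) x = poly h x / J" for x by (simp add: KP_def h_def pderiv_smult pderiv_diff)
  have dK: "(poly KP has_real_derivative poly h x / J) (at x)" for x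
    using poly_DERIV[of KP x] dKP by simp
  have Kmono: "poly KP x < poly KP y" if "-a \<le> x" "x < y" "y \<le> 1+a" for x y
    using Amono[OF that] J by (simp add: Kx divide_strict_right_mono)
  have Kmono': "poly KP x \<le> poly KP y" if "-a \<le> x" "x \<le> y" "y \<le> 1+a" for x y
    using Kmono[of x y] that by (cases "x = y") auto
  have K0: "poly KP 0 = 0" by (simp add: Kx)
  have K1: "poly KP 1 = 1" using J by (simp add: Kx J_def)
  define lo where "lo = poly KP (-a)"
  define hi where "hi = poly KP (1+a)"
  have lo: "lo < 0" using Kmono[of "-a" 0] a K0 by (simp add: lo_def)
  have hi: "hi > 1" using Kmono[of 1 "1+a"] a K1 by (simp add: hi_def)
  define \<phi> where "\<phi> y = (THE x. x \<in> {-a..1+a} \<and> poly KP x = y)" for y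
  have Kinj: "x = y" if "x \<in> {-a..1+a}" "y \<in> {-a..1+a}" "poly KP x = poly KP y" for x y
    using Kmono[of x y] Kmono[of y x] that by (cases x y rule: linorder_cases) auto
  have ex: "\<exists>x. x \<in> {-a..1+a} \<and> poly KP x = y" if "y \<in> {lo..hi}" for y
  proof -
    have "continuous_on {-a..1+a} (poly KP)" by (intro continuous_intros)
    then show ?thesis using IVT'[of "poly KP" "-a" y "1+a"] that a by (auto simp: lo_def hi_def)
  qed
  have \<phi>1: "\<phi> y \<in> {-a..1+a} \<and> poly KP (\<phi> y) = y" if "y \<in> {lo..hi}" for y
    unfolding \<phi>_def by (rule theI') (use ex[OF that] Kinj in blast)
  have \<phi>2: "\<phi> (poly KP x) = x" if "x \<in> {-a..1+a}" for x
    unfolding \<phi>_def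
  proof (rule the_equality)
    show "x \<in> {-a..1+a} \<and> poly KP x = poly KP x" using that by simp
    fix z assume "z \<in> {-a..1+a} \<and> poly KP z = poly KP x"
    then show "z = x" using Kinj that by blast
  qed
  have \<phi>3: "\<phi> y \<in> {-a<..<1+a}" if "y \<in> {lo<..<hi}" for y
  proof -
    have "\<phi> y \<in> {-a..1+a}" "poly KP (\<phi> y) = y" using \<phi>1[of y] that by auto
    moreover have "\<phi> y \<noteq> -a" "\<phi> y \<noteq> 1+a" using that calculation(2) by (auto simp: lo_def hi_def)
    ultimately show ?thesis by auto
  qed
  define U where "U = {lo<..<hi}"
  have "open U" by (simp add: U_def)
  have U01: "{0..1} \<subseteq> U" using lo hi by (auto simp: U_def)
  have cont: "isCont \<phi> y" if "y \<in> U" for y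
  proof -
    define x where "x = \<phi> y"
    have x: "x \<in> {-a<..<1+a}" using \<phi>3 that by (simp add: x_def U_def)
    define d where "d = min (x+a) (1+a-x)"
    have "d > 0" using x by (simp add: d_def)
    have "isCont \<phi> (poly KP x)"
      by (rule isCont_inverse_function[of d]) (use \<open>d > 0\<close> x in \<open>auto simp: d_def intro!: \<phi>2\<close>)
    moreover have "poly KP x = y" using \<phi>1[of y] that by (simp add: x_def U_def)
    ultimately show ?thesis by simp
  qed
  have hpos\<phi>: "poly h (\<phi> y) > 0" if "y \<in> U" for y
    using \<phi>3[of y] that hpos by (auto simp: U_def)
  have der: "(\<phi> has_real_derivative J / poly h (\<phi> y)) (at y)" if "y \<in> U" for y
  proof -
    have "(\<phi> has_real_derivative inverse (poly h (\<phi> y) / J)) (at y)"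
      by (rule DERIV_inverse_function[where f="poly KP" and g=\<phi> and a=lo and b=hi])
        (use that hpos\<phi>[OF that] J dK cont \<phi>1 in \<open>auto simp: U_def\<close>)
    then show ?thesis by simp
  qed
  have deriv1: "deriv \<phi> y = J / poly h (\<phi> y)" if "y \<in> U" for y
    using der[OF that] by (rule DERIV_imp_deriv)
  have chainR: "((\<lambda>y. poly P (\<phi> y) / poly h (\<phi> y) ^ Suc m) has_real_derivative
      poly (smult J (pderiv P * h - smult (of_nat (Suc m)) (P * pderiv h))) (\<phi> y) / poly h (\<phi> y) ^ Suc (Suc (Suc m))) (at y)"
    if "y \<in> U" for P m y
  proof -
    have "((\<lambda>y. poly P (\<phi> y) / poly h (\<phi> y) ^ Suc m) has_real_derivative
      (poly (pderiv P * h - smult (of_nat (Suc m)) (P * pderiv h)) (\<phi> y) / poly h (\<phi> y) ^ Suc (Suc m)) * (J / poly h (\<phi> y))) (at y)"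
      by (rule DERIV_chain2[OF rat_deriv der[OF that]]) (use hpos\<phi>[OF that] in simp)
    then show ?thesis using hpos\<phi>[OF that] by (simp add: field_simps)
  qed
  have rep: "\<exists>P m. \<forall>y\<in>U. (deriv ^^ Suc k) \<phi> y = poly P (\<phi> y) / poly h (\<phi> y) ^ Suc m" for k
  proof (induction k)
    case 0
    show ?case by (rule exI[of _ "[:J:]"], rule exI[of _ 0]) (simp add: deriv1)
  next
    case (Suc k)
    then obtain P m where Pm: "\<forall>y\<in>U. (deriv ^^ Suc k) \<phi> y = poly P (\<phi> y) / poly h (\<phi> y) ^ Suc m" by blast
    define Q where "Q = smult J (pderiv P * h - smult (of_nat (Suc m)) (P * pderiv h))"
    have "(deriv ^^ Suc (Suc k)) \<phi> y = poly Q (\<phi> y) / poly h (\<phi> y) ^ Suc (Suc (Suc m))" if "y \<in> U" for y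
    proof -
      have "((deriv ^^ Suc k) \<phi> has_real_derivative poly Q (\<phi> y) / poly h (\<phi> y) ^ Suc (Suc (Suc m))) (at y)"
        unfolding Q_def
        by (rule has_field_derivative_transform_within_open[OF chainR[OF that, of P m] \<open>open U\<close> that])
           (use Pm in auto)
      then have "deriv ((deriv ^^ Suc k) \<phi>) y = poly Q (\<phi> y) / poly h (\<phi> y) ^ Suc (Suc (Suc m))"
        by (rule DERIV_imp_deriv)
      then show ?thesis by simp
    qed
    then show ?case by blast
  qed
  have smooth: "smooth_on_open U \<phi>"
    unfolding smooth_on_open_def
  proof (intro conjI allI ballI)
    show "open U" by fact
    fix k y assume y: "y \<in> U"
    show "(deriv ^^ k) \<phi> field_differentiable at y"
    proof (cases k)
      case 0
      then show ?thesis using der[OF y] by (auto simp: field_differentiable_def)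
    next
      case (Suc k')
      obtain P m where Pm: "\<forall>y\<in>U. (deriv ^^ Suc k') \<phi> y = poly P (\<phi> y) / poly h (\<phi> y) ^ Suc m"
        using rep by blast
      have "((deriv ^^ Suc k') \<phi> has_real_derivative poly (smult J (pderiv P * h - smult (of_nat (Suc m)) (P * pderiv h))) (\<phi> y) / poly h (\<phi> y) ^ Suc (Suc (Suc m))) (at y)"
        by (rule has_field_derivative_transform_within_open[OF chainR[OF y, of P m] \<open>open U\<close> y])
           (use Pm in auto)
      then show ?thesis using Suc by (auto simp: field_differentiable_def)
    qed
  qed
  have \<phi>0: "\<phi> 0 = 0" using \<phi>2[of 0] a K0 by simp
  have \<phi>1': "\<phi> 1 = 1" using \<phi>2[of 1] a K1 by simp
  have K\<phi>: "poly KP (\<phi> y) = y" if "y \<in> {0..1}" for y using \<phi>1[of y] that lo hi by auto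
  have \<phi>in: "\<phi> y \<in> {-a..1+a}" if "y \<in> {0..1}" for y using \<phi>1[of y] that lo hi by auto
  have smono: "strict_mono_on {0..1} \<phi>"
  proof (rule strict_mono_onI)
    fix x y :: real assume xy: "x \<in> {0..1}" "y \<in> {0..1}" "x < y"
    show "\<phi> x < \<phi> y"
    proof (rule ccontr)
      assume "\<not> \<phi> x < \<phi> y"
      then have "poly KP (\<phi> y) \<le> poly KP (\<phi> x)" using Kmono' \<phi>in xy by auto
      then show False using K\<phi> xy by auto
    qed
  qed
  have img: "\<phi> ` {0..1} = {0..1}"
  proof
    show "\<phi> ` {0..1} \<subseteq> {0..1}"
    proof
      fix z assume "z \<in> \<phi> ` {0..1}"
      then obtain y where y: "y \<in> {0..1}" "z = \<phi> y" by auto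
      have "\<phi> 0 \<le> \<phi> y" "\<phi> y \<le> \<phi> 1"
        using smono y by (auto simp: strict_mono_on_def less_eq_real_def)
      then show "z \<in> {0..1}" using y \<phi>0 \<phi>1' by auto
    qed
    show "{0..1} \<subseteq> \<phi> ` {0..1}"
    proof
      fix x :: real assume x: "x \<in> {0..1}"
      have "poly KP x \<in> {0..1}" using Kmono'[of 0 x] Kmono'[of x 1] x a K0 K1 by auto
      moreover have "\<phi> (poly KP x) = x" using \<phi>2 x a by auto
      ultimately show "x \<in> \<phi> ` {0..1}" by force
    qed
  qed
  have bij: "bij_betw \<phi> {0..1} {0..1}"
    unfolding bij_betw_def using img strict_mono_on_imp_inj_on[OF smono] by simp
  have op: "op_diffeo_unit \<phi>"
    unfolding op_diffeo_unit_def
  proof (intro conjI exI)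
    show "smooth_on_unit \<phi>" using smooth U01 by (auto simp: smooth_on_unit_def)
    show "smooth_on_unit (poly KP)" by (rule smooth_poly)
    show "\<forall>x\<in>{0..1}. poly KP (\<phi> x) = x" using K\<phi> by blast
  qed (use bij smono in auto)
  have contphi: "continuous_on {0..1} \<phi>"
    using cont U01 by (auto intro!: continuous_at_imp_continuous_on)
  have contd: "continuous_on {0..1} (deriv \<phi>)"
  proof -
    have "continuous_on {0..1} (\<lambda>s. J / poly h (\<phi> s))"
    proof (rule continuous_at_imp_continuous_on, rule ballI)
      fix s :: real assume s: "s \<in> {0..1}"
      have "isCont (\<lambda>s. poly h (\<phi> s)) s"
        using cont[of s] s U01 by (auto intro!: continuous_intros isCont_o2[where g="poly h"])
      then show "isCont (\<lambda>s. J / poly h (\<phi> s)) s"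
        using hpos\<phi>[of s] s U01 by (auto intro!: continuous_intros)
    qed
    then show ?thesis by (rule continuous_on_cong[THEN iffD1, rotated 2]) (use deriv1 U01 in auto)
  qed
  show ?thesis
  proof (intro exI conjI ballI)
    show "op_diffeo_unit \<phi>" by fact
    show "J > 0" by fact
    show "\<phi> 0 = 0" "\<phi> 1 = 1" by fact+
    show "\<phi> ` {0..1} \<subseteq> {0..1}" using img by simp
    show "continuous_on {0..1} \<phi>" "continuous_on {0..1} (deriv \<phi>)" by fact+
    fix s :: real assume s: "s \<in> {0..1}"
    then have sU: "s \<in> U" using U01 by auto
    show "(\<phi> has_real_derivative deriv \<phi> s) (at s)" using der[OF sU] deriv1[OF sU] by simp
    show "deriv \<phi> s \<ge> 0" using deriv1[OF sU] hpos\<phi>[OF sU] J by simp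
    show "poly (pderiv A) (\<phi> s) * deriv \<phi> s = J" using deriv1[OF sU] hpos\<phi>[OF sU] by (simp add: h_def)
  qed
qed



lemma antideriv_sum: "\<exists>B::real poly. \<forall>x. poly (pderiv B) x = (\<Sum>i\<le>n. a i * x^i)"
proof (induction n)
  case 0 show ?case by (rule exI[of _ "[:0, a 0:]"]) (simp add: pderiv_pCons)
next
  case (Suc n)
  then obtain B where B: "\<forall>x. poly (pderiv B) x = (\<Sum>i\<le>n. a i * x^i)" by blast
  show ?case
    by (rule exI[of _ "B + monom (a (Suc n) / real (Suc (Suc n))) (Suc (Suc n))"])
       (simp add: pderiv_add pderiv_monom poly_monom B)
qed

lemma ennreal_le_add:
  fixes a b c :: real
  assumes "a \<le> b + c" "0 \<le> b" "0 \<le> c"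
  shows "ennreal a \<le> ennreal b + ennreal c"
  using assms by (metis ennreal_leI ennreal_plus)

lemma nn_ind_const:
  assumes "c \<ge> 0"
  shows "(\<integral>\<^sup>+x. ennreal (c * indicator {0..1::real} x) \<partial>lborel) = ennreal c"
proof -
  have "(\<integral>\<^sup>+x. ennreal (c * indicator {0..1::real} x) \<partial>lborel) = (\<integral>\<^sup>+x. ennreal c * indicator {0..1::real} x \<partial>lborel)"
    by (rule nn_integral_cong) (auto simp: indicator_def)
  also have "\<dots> = ennreal c" by (simp add: nn_integral_cmult_indicator)
  finally show ?thesis .
qed

lemma approx_cont:
  fixes F :: "real \<Rightarrow> real"
  assumes Fm: "F \<in> borel_measurable borel" and Fnn: "\<And>x. F x \<ge> 0"
    and Fint: "(\<integral>\<^sup>+x. ennreal (F x) \<partial>lborel) < \<infinity>" and eta: "\<eta> > 0"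
  shows "\<exists>c. continuous_on UNIV c \<and> (\<forall>x. c x \<ge> 0) \<and>
     (\<integral>\<^sup>+x. ennreal (\<bar>F x - c x\<bar> * indicator {0..1} x) \<partial>lborel) < ennreal \<eta>"
proof -
  have [measurable]: "F \<in> borel_measurable lborel" using Fm by simp
  have e2: "ennreal (\<eta>/2) > 0" using eta by simp
  have lim1: "(\<lambda>K::nat. \<integral>\<^sup>+x. ennreal (F x - min (F x) (real K)) \<partial>lborel) \<longlonglongrightarrow> (\<integral>\<^sup>+(x::real). 0 \<partial>lborel)"
  proof (rule nn_integral_dominated_convergence[where w="\<lambda>x. ennreal (F x)" and u="\<lambda>K x. ennreal (F x - min (F x) (real K))" and u'="\<lambda>x. 0" and M=lborel])
    show "(\<integral>\<^sup>+x. ennreal (F x) \<partial>lborel) < \<infinity>" by fact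
    show "AE x in lborel. ennreal (F x - min (F x) (real j)) \<le> ennreal (F x)" for j
      using Fnn by (auto intro!: ennreal_leI)
    show "AE x in lborel. (\<lambda>i. ennreal (F x - min (F x) (real i))) \<longlonglongrightarrow> 0"
    proof (rule AE_I2)
      fix x
      have "eventually (\<lambda>i. ennreal (F x - min (F x) (real i)) = 0) sequentially"
        unfolding eventually_sequentially
      proof (intro exI allI impI)
        fix i assume "nat \<lceil>F x\<rceil> \<le> i"
        then have "F x \<le> real i" using real_nat_ceiling_ge[of "F x"] by linarith
        then show "ennreal (F x - min (F x) (real i)) = 0" by simp
      qed
      then show "(\<lambda>i. ennreal (F x - min (F x) (real i))) \<longlonglongrightarrow> 0" by (rule tendsto_eventually)
    qed
  qed auto
  then obtain K :: nat where K: "(\<integral>\<^sup>+x. ennreal (F x - min (F x) (real K)) \<partial>lborel) < ennreal (\<eta>/2)"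
    using order_tendstoD(2)[OF lim1, of "ennreal (\<eta>/2)"] e2 by (auto simp: eventually_sequentially)
  have "F \<in> borel_measurable lebesgue" by (rule measurable_completion) simp
  then have "F measurable_on UNIV"
    using Fnn by (intro lebesgue_measurable_imp_measurable_on_nnreal) auto
  then obtain N g where N: "negligible N" and gc: "\<And>n. continuous_on UNIV (g n)"
    and gl: "\<And>x. x \<notin> N \<Longrightarrow> (\<lambda>n. g n x) \<longlonglongrightarrow> F x"
    unfolding measurable_on_def by auto
  define cl where "cl t = min (max t 0) (real K)" for t
  have [measurable]: "g n \<in> borel_measurable lborel" for n
    using borel_measurable_continuous_onI[OF gc] by simp
  have lim2: "(\<lambda>n. \<integral>\<^sup>+x. ennreal (\<bar>min (F x) (real K) - cl (g n x)\<bar> * indicator {0..1} x) \<partial>lborel)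
      \<longlonglongrightarrow> (\<integral>\<^sup>+(x::real). 0 \<partial>lborel)"
  proof (rule nn_integral_dominated_convergence[where w="\<lambda>x::real. ennreal (real K * indicator {0..1} x)" and u="\<lambda>n x. ennreal (\<bar>min (F x) (real K) - cl (g n x)\<bar> * indicator {0..1} x)" and u'="\<lambda>x. 0" and M=lborel])
    show "(\<integral>\<^sup>+(x::real). ennreal (real K * indicator {0..1} x) \<partial>lborel) < \<infinity>"
      using nn_ind_const[of "real K"] by simp
    show "AE x in lborel. ennreal (\<bar>min (F x) (real K) - cl (g j x)\<bar> * indicator {0..1} x) \<le> ennreal (real K * indicator {0..1} x)" for j
    proof (intro AE_I2 ennreal_leI)
      fix x
      have "\<bar>min (F x) (real K) - cl (g j x)\<bar> \<le> real K" using Fnn[of x] by (auto simp: cl_def abs_le_iff min_def max_def)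
      then show "\<bar>min (F x) (real K) - cl (g j x)\<bar> * indicator {0..1} x \<le> real K * indicator {0..1} x"
        by (auto simp: indicator_def)
    qed
    have "AE x in lebesgue. (\<lambda>i. ennreal (\<bar>min (F x) (real K) - cl (g i x)\<bar> * indicator {0..1} x)) \<longlonglongrightarrow> 0"
    proof (rule AE_I')
      show "N \<in> null_sets lebesgue" using N negligible_iff_null_sets by blast
      show "{x\<in>space lebesgue. \<not> (\<lambda>i. ennreal (\<bar>min (F x) (real K) - cl (g i x)\<bar> * indicator {0..1} x)) \<longlonglongrightarrow> 0} \<subseteq> N"
      proof
        fix x assume x: "x \<in> {x\<in>space lebesgue. \<not> (\<lambda>i. ennreal (\<bar>min (F x) (real K) - cl (g i x)\<bar> * indicator {0..1} x)) \<longlonglongrightarrow> 0}"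
        show "x \<in> N"
        proof (rule ccontr)
          assume "x \<notin> N"
          then have "(\<lambda>n. cl (g n x)) \<longlonglongrightarrow> cl (F x)"
            unfolding cl_def by (intro tendsto_intros gl)
          moreover have "cl (F x) = min (F x) (real K)" using Fnn[of x] by (simp add: cl_def)
          ultimately have "(\<lambda>n. \<bar>min (F x) (real K) - cl (g n x)\<bar> * indicator {0..1} x) \<longlonglongrightarrow> \<bar>min (F x) (real K) - min (F x) (real K)\<bar> * indicator {0..1} x"
            by (intro tendsto_intros) auto
          then have "(\<lambda>n. ennreal (\<bar>min (F x) (real K) - cl (g n x)\<bar> * indicator {0..1} x)) \<longlonglongrightarrow> ennreal 0"
            by (intro tendsto_ennrealI) simp
          then show False using x by simp
        qed
      qed
    qed
    then show "AE x in lborel. (\<lambda>i. ennreal (\<bar>min (F x) (real K) - cl (g i x)\<bar> * indicator {0..1} x)) \<longlonglongrightarrow> 0"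
      by (simp add: AE_completion_iff)
  qed (auto simp: cl_def)
  then obtain n where n: "(\<integral>\<^sup>+x. ennreal (\<bar>min (F x) (real K) - cl (g n x)\<bar> * indicator {0..1} x) \<partial>lborel) < ennreal (\<eta>/2)"
    using order_tendstoD(2)[OF lim2, of "ennreal (\<eta>/2)"] e2 by (auto simp: eventually_sequentially)
  define c where "c x = cl (g n x)" for x
  have cc: "continuous_on UNIV c" unfolding c_def cl_def
    by (intro continuous_intros gc)
  have c0: "c x \<ge> 0" for x by (simp add: c_def cl_def)
  have "(\<integral>\<^sup>+x. ennreal (\<bar>F x - c x\<bar> * indicator {0..1} x) \<partial>lborel)
      \<le> (\<integral>\<^sup>+x. ennreal (F x - min (F x) (real K)) + ennreal (\<bar>min (F x) (real K) - cl (g n x)\<bar> * indicator {0..1} x) \<partial>lborel)"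
  proof (rule nn_integral_mono)
    fix x
    have "\<bar>F x - c x\<bar> * indicator {0..1} x \<le> (F x - min (F x) (real K)) + \<bar>min (F x) (real K) - cl (g n x)\<bar> * indicator {0..1} x"
      by (auto simp: c_def indicator_def)
    then show "ennreal (\<bar>F x - c x\<bar> * indicator {0..1} x) \<le> ennreal (F x - min (F x) (real K)) + ennreal (\<bar>min (F x) (real K) - cl (g n x)\<bar> * indicator {0..1} x)"
      by (rule ennreal_le_add) auto
  qed
  also have "\<dots> = (\<integral>\<^sup>+x. ennreal (F x - min (F x) (real K)) \<partial>lborel) + (\<integral>\<^sup>+x. ennreal (\<bar>min (F x) (real K) - cl (g n x)\<bar> * indicator {0..1} x) \<partial>lborel)"
    by (rule nn_integral_add) (auto simp: cl_def)
  also have "\<dots> < ennreal (\<eta>/2 + \<eta>/2)"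
    using K n by (rule add_mono_ennreal)
  also have "\<dots> = ennreal \<eta>" by simp
  finally show ?thesis using cc c0 by blast
qed

lemma approx_poly:
  fixes F :: "real \<Rightarrow> real"
  assumes Fm: "F \<in> borel_measurable borel" and Fnn: "\<And>x. F x \<ge> 0"
    and Fint: "(\<integral>\<^sup>+x. ennreal (F x) \<partial>lborel) < \<infinity>" and eta: "\<eta> > 0"
  shows "\<exists>A::real poly. (\<forall>x\<in>{0..1}. poly (pderiv A) x > 0) \<and>
     (\<integral>\<^sup>+x. ennreal (\<bar>F x - poly (pderiv A) x\<bar> * indicator {0..1} x) \<partial>lborel) < ennreal \<eta>"
proof -
  obtain c where cc: "continuous_on UNIV c" and c0: "\<And>x. c x \<ge> 0"
    and ci: "(\<integral>\<^sup>+x. ennreal (\<bar>F x - c x\<bar> * indicator {0..1} x) \<partial>lborel) < ennreal (\<eta>/2)"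
    using approx_cont[OF Fm Fnn Fint, of "\<eta>/2"] eta by auto
  define \<delta> where "\<delta> = \<eta>/8"
  have \<delta>: "\<delta> > 0" using eta by (simp add: \<delta>_def)
  obtain q where q: "real_polynomial_function q" and qc: "\<And>x. x \<in> {0..1} \<Longrightarrow> \<bar>c x - q x\<bar> < \<delta>"
    using Stone_Weierstrass_real_polynomial_function[of "{0..1::real}" c \<delta>] cc \<delta>
    by (auto intro: continuous_on_subset)
  obtain a n where qa: "q = (\<lambda>x. \<Sum>i\<le>n. a i * x^i)" using q real_polynomial_function_iff_sum by blast
  obtain B :: "real poly" where B: "\<And>x. poly (pderiv B) x = (\<Sum>i\<le>n. a i * x^i)"
    using antideriv_sum by blast
  define A where "A = B + [:0, \<delta>:]"
  have A: "poly (pderiv A) x = q x + \<delta>" for x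
    by (simp add: A_def pderiv_add pderiv_pCons B qa)
  have pos: "\<forall>x\<in>{0..1}. poly (pderiv A) x > 0"
  proof
    fix x :: real assume "x \<in> {0..1}"
    then show "poly (pderiv A) x > 0" using qc[of x] c0[of x] A by (auto simp: abs_less_iff)
  qed
  have "(\<integral>\<^sup>+x. ennreal (\<bar>F x - poly (pderiv A) x\<bar> * indicator {0..1} x) \<partial>lborel)
     \<le> (\<integral>\<^sup>+x. ennreal (\<bar>F x - c x\<bar> * indicator {0..1} x) + ennreal (2*\<delta> * indicator {0..1} x) \<partial>lborel)"
  proof (rule nn_integral_mono)
    fix x :: real
    have "\<bar>F x - poly (pderiv A) x\<bar> * indicator {0..1} x \<le> \<bar>F x - c x\<bar> * indicator {0..1} x + 2*\<delta> * indicator {0..1} x"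
    proof (cases "x \<in> {0..1}")
      case True
      then show ?thesis using qc[of x] A[of x] by (auto simp: abs_le_iff abs_less_iff)
    qed simp
    then show "ennreal (\<bar>F x - poly (pderiv A) x\<bar> * indicator {0..1} x) \<le> ennreal (\<bar>F x - c x\<bar> * indicator {0..1} x) + ennreal (2*\<delta> * indicator {0..1} x)"
      by (rule ennreal_le_add) (use \<delta> in auto)
  qed
  also have "\<dots> = (\<integral>\<^sup>+x. ennreal (\<bar>F x - c x\<bar> * indicator {0..1} x) \<partial>lborel) + (\<integral>\<^sup>+x. ennreal (2*\<delta> * indicator {0..1::real} x) \<partial>lborel)"
  proof (rule nn_integral_add)
    have [measurable]: "F \<in> borel_measurable lborel" using Fm by simp
    have [measurable]: "c \<in> borel_measurable lborel" using borel_measurable_continuous_onI[OF cc] by simp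
    show "(\<lambda>x. ennreal (\<bar>F x - c x\<bar> * indicator {0..1} x)) \<in> borel_measurable lborel" by measurable
    show "(\<lambda>x. ennreal (2*\<delta> * indicator {0..1::real} x)) \<in> borel_measurable lborel" by measurable
  qed
  also have "\<dots> = (\<integral>\<^sup>+x. ennreal (\<bar>F x - c x\<bar> * indicator {0..1} x) \<partial>lborel) + ennreal (2*\<delta>)"
    using nn_ind_const[of "2*\<delta>"] \<delta> by simp
  also have "\<dots> < ennreal (\<eta>/2 + 3*\<delta>)"
    by (rule add_mono_ennreal[OF ci]) (use \<delta> in \<open>simp add: ennreal_less_iff\<close>)
  also have "\<dots> \<le> ennreal \<eta>" using eta by (intro ennreal_leI) (simp add: \<delta>_def)
  finally show ?thesis using pos by blast
qed


lemma ennreal_mult_ind: "ennreal (a * indicator A x) = ennreal a * indicator A x"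
  by (auto simp: indicator_def)

theorem lemma9:
  fixes N :: nat and f :: "nat \<Rightarrow> real \<Rightarrow> real" and \<epsilon> :: real
  assumes "N \<ge> 1"
    and "\<And>i. i \<in> {1..N} \<Longrightarrow> f i \<in> borel_measurable (restrict_space lborel {0..1})"
    and "\<And>i t. i \<in> {1..N} \<Longrightarrow> t \<in> {0..1} \<Longrightarrow> f i t \<ge> 0"
    and "\<epsilon> > 0"
  shows "\<exists>\<phi> :: nat \<Rightarrow> real \<Rightarrow> real. (\<forall>i\<in>{1..N}. op_diffeo_unit (\<phi> i)) \<and>
     (\<integral>\<^sup>+ s\<in>{0..1}. ennreal (MAX i\<in>{1..N}. f i (\<phi> i s) * deriv (\<phi> i) s) \<partial>lborel)
       \<le> (MAX i\<in>{1..N}. \<integral>\<^sup>+ t\<in>{0..1}. ennreal (f i t) \<partial>lborel) + ennreal \<epsilon>"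
proof -
  define I where "I i = (\<integral>\<^sup>+ t\<in>{0..1}. ennreal (f i t) \<partial>lborel)" for i
  have fin: "finite {1..N}" "{1..N} \<noteq> {}" using assms(1) by auto
  obtain \<phi>0 where \<phi>0: "op_diffeo_unit \<phi>0"
    using diffeo_from_poly[of "[:0,1:]"] by (auto simp: pderiv_pCons)
  show ?thesis
  proof (cases "\<exists>i\<in>{1..N}. I i = \<infinity>")
    case True
    then obtain k where k: "k \<in> {1..N}" "I k = \<infinity>" by blast
    have "I k \<le> (MAX i\<in>{1..N}. I i)" by (rule Max_ge[OF finite_imageI[OF fin(1)] imageI[OF k(1)]])
    then have "(MAX i\<in>{1..N}. I i) = \<infinity>" using k(2) top_unique infinity_ennreal_def by metis
    then show ?thesis using \<phi>0 unfolding I_def by (intro exI[of _ "\<lambda>_. \<phi>0"]) simp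
  next
    case False
    then have finI: "I i < \<infinity>" if "i \<in> {1..N}" for i using that by (auto simp: less_top)
    define \<eta> where "\<eta> = \<epsilon> / (real N + 1)"
    have \<eta>: "\<eta> > 0" using assms(4) by (simp add: \<eta>_def)
    define F where "F i t = f i t * indicator {0..1} t" for i t
    have Fm: "F i \<in> borel_measurable borel" if "i \<in> {1..N}" for i
    proof -
      have "(\<lambda>x. indicator {0..1} x *\<^sub>R f i x) \<in> borel_measurable lborel"
        using assms(2)[OF that] by (subst (asm) borel_measurable_restrict_space_iff) auto
      moreover have "F i = (\<lambda>x. f i x * indicator {0..1} x)" by (simp add: F_def fun_eq_iff)
      ultimately show ?thesis by (simp add: mult.commute)
    qed
    have Fnn: "F i x \<ge> 0" if "i \<in> {1..N}" for i x
      using assms(3)[OF that] by (auto simp: F_def indicator_def)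
    have FI: "(\<integral>\<^sup>+x. ennreal (F i x) \<partial>lborel) = I i" for i
      unfolding I_def F_def by (simp add: ennreal_mult_ind)
    have "\<forall>i\<in>{1..N}. \<exists>A::real poly. (\<forall>x\<in>{0..1}. poly (pderiv A) x > 0) \<and>
     (\<integral>\<^sup>+x. ennreal (\<bar>F i x - poly (pderiv A) x\<bar> * indicator {0..1} x) \<partial>lborel) < ennreal \<eta>"
      using approx_poly[OF Fm Fnn, of _ \<eta>] finI FI \<eta> by auto
    then obtain A where Apos: "\<And>i x. i \<in> {1..N} \<Longrightarrow> x \<in> {0..1} \<Longrightarrow> poly (pderiv (A i)) x > 0"
      and Aint: "\<And>i. i \<in> {1..N} \<Longrightarrow> (\<integral>\<^sup>+x. ennreal (\<bar>F i x - poly (pderiv (A i)) x\<bar> * indicator {0..1} x) \<partial>lborel) < ennreal \<eta>"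
      by metis
    have "\<forall>i\<in>{1..N}. \<exists>\<phi> J. op_diffeo_unit \<phi> \<and> J > 0 \<and> \<phi> 0 = 0 \<and> \<phi> 1 = 1 \<and> \<phi> ` {0..1} \<subseteq> {0..1} \<and>
     continuous_on {0..1} \<phi> \<and> continuous_on {0..1} (deriv \<phi>) \<and>
     (\<forall>s\<in>{0..1}. (\<phi> has_real_derivative deriv \<phi> s) (at s) \<and> deriv \<phi> s \<ge> 0 \<and>
        poly (pderiv (A i)) (\<phi> s) * deriv \<phi> s = J)"
      using diffeo_from_poly Apos by blast
    then obtain \<phi> J where \<phi>: "\<And>i. i \<in> {1..N} \<Longrightarrow> op_diffeo_unit (\<phi> i) \<and> J i > 0 \<and> \<phi> i 0 = 0 \<and> \<phi> i 1 = 1 \<and> \<phi> i ` {0..1} \<subseteq> {0..1} \<and>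
     continuous_on {0..1} (\<phi> i) \<and> continuous_on {0..1} (deriv (\<phi> i)) \<and>
     (\<forall>s\<in>{0..1}. (\<phi> i has_real_derivative deriv (\<phi> i) s) (at s) \<and> deriv (\<phi> i) s \<ge> 0 \<and>
        poly (pderiv (A i)) (\<phi> i s) * deriv (\<phi> i) s = J i)"
      by metis
    define h where "h i = poly (pderiv (A i))" for i
    define D where "D i s = \<bar>F i (\<phi> i s) - h i (\<phi> i s)\<bar> * deriv (\<phi> i) s" for i s
    have hc: "continuous_on UNIV (h i)" for i unfolding h_def by (intro continuous_intros)
    have key: "(\<integral>\<^sup>+s. ennreal (D i s * indicator {0..1} s) \<partial>lborel) < ennreal \<eta> \<and>
        ennreal (J i) \<le> I i + ennreal \<eta> \<and>
        (\<lambda>s. ennreal (D i s * indicator {0..1} s)) \<in> borel_measurable lborel" if i: "i \<in> {1..N}" for i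
    proof -
      have P: "op_diffeo_unit (\<phi> i)" "J i > 0" "\<phi> i 0 = 0" "\<phi> i 1 = 1" "\<phi> i ` {0..1} \<subseteq> {0..1}"
        "continuous_on {0..1} (\<phi> i)" "continuous_on {0..1} (deriv (\<phi> i))"
        "\<And>s. s \<in> {0..1} \<Longrightarrow> (\<phi> i has_real_derivative deriv (\<phi> i) s) (at s)"
        "\<And>s. s \<in> {0..1} \<Longrightarrow> deriv (\<phi> i) s \<ge> 0"
        "\<And>s. s \<in> {0..1} \<Longrightarrow> h i (\<phi> i s) * deriv (\<phi> i) s = J i"
        using \<phi>[OF i] by (auto simp: h_def)
      have [measurable]: "F i \<in> borel_measurable borel" using Fm i .
      have [measurable]: "h i \<in> borel_measurable borel" using borel_measurable_continuous_onI[OF hc] .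
      define cl where "cl s = max 0 (min 1 s)" for s :: real
      have clc: "continuous_on UNIV cl" unfolding cl_def by (intro continuous_intros)
      have cl01: "cl s \<in> {0..1}" for s by (auto simp: cl_def)
      have c1: "continuous_on UNIV (\<lambda>s. \<phi> i (cl s))"
        by (rule continuous_on_compose2[OF P(6) clc]) (use cl01 in auto)
      have c2: "continuous_on UNIV (\<lambda>s. deriv (\<phi> i) (cl s))"
        by (rule continuous_on_compose2[OF P(7) clc]) (use cl01 in auto)
      have [measurable]: "(\<lambda>s. \<phi> i (cl s)) \<in> borel_measurable borel"
        using borel_measurable_continuous_onI[OF c1] .
      have [measurable]: "(\<lambda>s. deriv (\<phi> i) (cl s)) \<in> borel_measurable borel"
        using borel_measurable_continuous_onI[OF c2] .
      have Deq: "(\<lambda>s. ennreal (D i s * indicator {0..1} s)) = (\<lambda>s. ennreal (\<bar>F i (\<phi> i (cl s)) - h i (\<phi> i (cl s))\<bar> * deriv (\<phi> i) (cl s) * indicator {0..1} s))"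
      proof
        fix s :: real
        show "ennreal (D i s * indicator {0..1} s) = ennreal (\<bar>F i (\<phi> i (cl s)) - h i (\<phi> i (cl s))\<bar> * deriv (\<phi> i) (cl s) * indicator {0..1} s)"
          by (cases "s \<in> {0..1}") (auto simp: D_def cl_def)
      qed
      have Dm: "(\<lambda>s. ennreal (D i s * indicator {0..1} s)) \<in> borel_measurable lborel"
        unfolding Deq by measurable
      have sub: "(\<integral>\<^sup>+x. ennreal (G x * indicator {0..1} x) \<partial>lborel) = (\<integral>\<^sup>+x. ennreal (G (\<phi> i x) * deriv (\<phi> i) x * indicator {0..1} x) \<partial>lborel)"
        if Gm: "G \<in> borel_measurable borel" for G
      proof -
        have [measurable]: "G \<in> borel_measurable borel" by (rule Gm)
        have sm: "set_borel_measurable borel {\<phi> i 0..\<phi> i 1} G"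
          unfolding set_borel_measurable_def by measurable
        have "(\<integral>\<^sup>+x. ennreal (G x * indicator {\<phi> i 0..\<phi> i 1} x) \<partial>lborel) = (\<integral>\<^sup>+x. ennreal (G (\<phi> i x) * deriv (\<phi> i) x * indicator {0..1} x) \<partial>lborel)"
          by (rule nn_integral_substitution[where g="\<phi> i" and a=0 and b=1 and f=G, OF sm]) (use P in \<open>auto\<close>)
        then show ?thesis using P by simp
      qed
      have G1: "(\<lambda>t. \<bar>F i t - h i t\<bar>) \<in> borel_measurable borel" by measurable
      have "(\<integral>\<^sup>+s. ennreal (D i s * indicator {0..1} s) \<partial>lborel) = (\<integral>\<^sup>+x. ennreal (\<bar>F i x - h i x\<bar> * indicator {0..1} x) \<partial>lborel)"
        unfolding D_def using sub[OF G1] by simp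
      also have "\<dots> < ennreal \<eta>" using Aint[OF i] by (simp add: h_def)
      finally have k1: "(\<integral>\<^sup>+s. ennreal (D i s * indicator {0..1} s) \<partial>lborel) < ennreal \<eta>" .
      have "ennreal (J i) = (\<integral>\<^sup>+x. ennreal (J i * indicator {0..1::real} x) \<partial>lborel)"
        using nn_ind_const[of "J i"] P(2) by simp
      also have "\<dots> = (\<integral>\<^sup>+x. ennreal (h i (\<phi> i x) * deriv (\<phi> i) x * indicator {0..1} x) \<partial>lborel)"
        by (rule nn_integral_cong) (use P(10) in \<open>auto simp: indicator_def\<close>)
      also have "\<dots> = (\<integral>\<^sup>+x. ennreal (h i x * indicator {0..1} x) \<partial>lborel)"
        by (rule sub[symmetric]) measurable
      also have "\<dots> \<le> (\<integral>\<^sup>+x. ennreal (F i x) + ennreal (\<bar>F i x - h i x\<bar> * indicator {0..1} x) \<partial>lborel)"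
      proof (rule nn_integral_mono)
        fix x :: real
        have "h i x * indicator {0..1} x \<le> F i x + \<bar>F i x - h i x\<bar> * indicator {0..1} x"
          using Fnn[OF i, of x] by (auto simp: indicator_def)
        then show "ennreal (h i x * indicator {0..1} x) \<le> ennreal (F i x) + ennreal (\<bar>F i x - h i x\<bar> * indicator {0..1} x)"
          by (rule ennreal_le_add) (use Fnn[OF i, of x] in auto)
      qed
      also have "\<dots> = (\<integral>\<^sup>+x. ennreal (F i x) \<partial>lborel) + (\<integral>\<^sup>+x. ennreal (\<bar>F i x - h i x\<bar> * indicator {0..1} x) \<partial>lborel)"
        by (rule nn_integral_add) measurable
      also have "\<dots> \<le> I i + ennreal \<eta>"
        using Aint[OF i] FI[of i] by (intro add_mono) (auto simp: h_def)
      finally have k2: "ennreal (J i) \<le> I i + ennreal \<eta>" .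
      show ?thesis using k1 k2 Dm by blast
    qed
    define MJ where "MJ = (MAX i\<in>{1..N}. J i)"
    have "MJ \<in> J ` {1..N}" unfolding MJ_def using fin by (intro Max_in) auto
    then obtain k where k: "k \<in> {1..N}" "MJ = J k" by auto
    have MJpos: "MJ > 0" using k \<phi> by auto
    have pt: "ennreal (MAX i\<in>{1..N}. f i (\<phi> i s) * deriv (\<phi> i) s) * indicator {0..1} s
       \<le> ennreal (MJ * indicator {0..1} s) + (\<Sum>i\<in>{1..N}. ennreal (D i s * indicator {0..1} s))" for s
    proof (cases "s \<in> {0..1}")
      case False
      then show ?thesis by simp
    next
      case True
      have Dnn: "D j s \<ge> 0" if j: "j \<in> {1..N}" for j
        using \<phi>[OF j] True by (auto simp: D_def)
      have each: "f i (\<phi> i s) * deriv (\<phi> i) s \<le> MJ + (\<Sum>j\<in>{1..N}. D j s)" if i: "i \<in> {1..N}" for i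
      proof -
        have \<phi>s: "\<phi> i s \<in> {0..1}" using \<phi>[OF i] True by (meson image_subset_iff)
        have F\<phi>: "F i (\<phi> i s) = f i (\<phi> i s)" using \<phi>s by (simp add: F_def)
        have d0: "deriv (\<phi> i) s \<ge> 0" and eqJ: "h i (\<phi> i s) * deriv (\<phi> i) s = J i"
          using \<phi>[OF i] True by (auto simp: h_def)
        have "f i (\<phi> i s) * deriv (\<phi> i) s = h i (\<phi> i s) * deriv (\<phi> i) s + (F i (\<phi> i s) - h i (\<phi> i s)) * deriv (\<phi> i) s"
          using F\<phi> by (simp add: algebra_simps)
        also have "\<dots> \<le> J i + D i s"
          using eqJ mult_right_mono[OF abs_ge_self d0, of "F i (\<phi> i s) - h i (\<phi> i s)"] by (simp add: D_def)
        also have "\<dots> \<le> MJ + (\<Sum>j\<in>{1..N}. D j s)"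
        proof (rule add_mono)
          show "J i \<le> MJ" unfolding MJ_def using fin i by (intro Max_ge) auto
          show "D i s \<le> (\<Sum>j\<in>{1..N}. D j s)" using fin i Dnn by (intro member_le_sum) auto
        qed
        finally show ?thesis .
      qed
      then have "(MAX i\<in>{1..N}. f i (\<phi> i s) * deriv (\<phi> i) s) \<le> MJ + (\<Sum>j\<in>{1..N}. D j s)"
        using fin by (simp add: Max_le_iff)
      then have "ennreal (MAX i\<in>{1..N}. f i (\<phi> i s) * deriv (\<phi> i) s) \<le> ennreal (MJ + (\<Sum>j\<in>{1..N}. D j s))"
        by (rule ennreal_leI)
      also have "\<dots> = ennreal MJ + (\<Sum>j\<in>{1..N}. ennreal (D j s))"
      proof -
        have "(\<Sum>j\<in>{1..N}. ennreal (D j s)) = ennreal (\<Sum>j\<in>{1..N}. D j s)"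
          by (rule sum_ennreal) (rule Dnn)
        moreover have "(\<Sum>j\<in>{1..N}. D j s) \<ge> 0" using Dnn by (intro sum_nonneg) auto
        ultimately show ?thesis using MJpos by (simp add: ennreal_plus)
      qed
      finally show ?thesis using True by simp
    qed
    have "(\<integral>\<^sup>+ s\<in>{0..1}. ennreal (MAX i\<in>{1..N}. f i (\<phi> i s) * deriv (\<phi> i) s) \<partial>lborel)
       \<le> (\<integral>\<^sup>+s. ennreal (MJ * indicator {0..1} s) + (\<Sum>i\<in>{1..N}. ennreal (D i s * indicator {0..1} s)) \<partial>lborel)"
      by (rule nn_integral_mono) (rule pt)
    also have "\<dots> = (\<integral>\<^sup>+s. ennreal (MJ * indicator {0..1::real} s) \<partial>lborel) + (\<integral>\<^sup>+s. (\<Sum>i\<in>{1..N}. ennreal (D i s * indicator {0..1} s)) \<partial>lborel)"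
    proof (rule nn_integral_add)
      show "(\<lambda>s. ennreal (MJ * indicator {0..1::real} s)) \<in> borel_measurable lborel" by measurable
      show "(\<lambda>s. \<Sum>i\<in>{1..N}. ennreal (D i s * indicator {0..1} s)) \<in> borel_measurable lborel"
        by (rule borel_measurable_sum) (use key in blast)
    qed
    also have "\<dots> = ennreal MJ + (\<Sum>i\<in>{1..N}. (\<integral>\<^sup>+s. ennreal (D i s * indicator {0..1} s) \<partial>lborel))"
      using nn_ind_const[of MJ] MJpos by (subst nn_integral_sum) (use key in auto)
    also have "\<dots> \<le> (I k + ennreal \<eta>) + (\<Sum>i\<in>{1..N}. ennreal \<eta>)"
      using key k by (intro add_mono sum_mono) (auto intro: less_imp_le)
    also have "\<dots> \<le> ((MAX i\<in>{1..N}. I i) + ennreal \<eta>) + (\<Sum>i\<in>{1..N}. ennreal \<eta>)"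
      by (intro add_mono order_refl Max_ge[OF finite_imageI[OF fin(1)] imageI[OF k(1)]])
    also have "\<dots> = (MAX i\<in>{1..N}. I i) + ennreal \<epsilon>"
    proof -
      have "ennreal \<eta> + (\<Sum>i\<in>{1..N}. ennreal \<eta>) = ennreal (\<eta> + real N * \<eta>)"
        using \<eta> by (simp add: ennreal_plus ennreal_mult ennreal_of_nat_eq_real_of_nat)
      also have "\<eta> + real N * \<eta> = \<epsilon>"
      proof -
        have nz: "real N + 1 \<noteq> 0" by simp
        have "\<eta> + real N * \<eta> = (real N + 1) * \<eta>" by (simp add: algebra_simps)
        also have "\<dots> = \<epsilon>" unfolding \<eta>_def using nz by simp
        finally show ?thesis .
      qed
      finally show ?thesis by (simp add: add.assoc)
    qed
    finally show ?thesis using \<phi> unfolding I_def by blast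
  qed
qed

end
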